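(* Let $V$ be a real vector space of dimension $n$ and $2\le k\le n-1$. A non-standard isotropic subspace $L\subseteq V\oplus\wedge^kV^*$ always satisfies (C3s), and never satisfies (C3w) or (C1). The properties (C2w) and (C2s) are independent for non-standard isotropic subspaces: there exist non-standard isotropic subspaces satisfying (C2s) but not (C2w), and ones satisfying (C2w) but not (C2s).
   Context: On $V\oplus\wedge^kV^*$ the pairing is $\langle X+\alpha,Y+\beta\rangle=i_X\beta+i_Y\alpha\in\wedge^{k-1}V^*$, with orthogonal $L^\perp$; $L$ is isotropic if $L\subseteq L^\perp$. $\mathrm{pr}_1,\mathrm{pr}_2$ are the projections; $E=\mathrm{pr}_1(L)$, $A_L=L\cap\wedge^kV^*$. For $W\subseteq V$, $\mathrm{Ann}(W)=\{\alpha\in\wedge^kV^*\mid i_Y\alpha=0\ \forall Y\in W\}$; for $S\subseteq\wedge^kV^*$, $S^\circ=\{X\in V\mid i_X\eta=0\ \forall\eta\in S\}$. An isotropic $L$ is non-standard if $\mathrm{Ann}(E)^\circ\neq E$, equivalently $n-k<\dim E<n$. Conditions: (C1) $L=L^\perp$; (C2w) $L\subseteq L^\perp$ and $L\cap V=\mathrm{pr}_2(L)^\circ$; (C2s) $L\subseteq L^\perp$ and $\mathrm{Ann}(L\cap V)=\mathrm{pr}_2(L)$; (C3w) $L\subseteq L^\perp$ and $E=A_L^\circ$; (C3s) $L\subseteq L^\perp$ and $\mathrm{Ann}(E)=A_L$. *)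

theory Defs
  imports "HOL-Analysis.Analysis"
begin

text \<open>V is modelled as real^('n::finite) (n = CARD('n)). A k-form on V (element of the k-th
exterior power of V^*) is modelled as an alternating multilinear function of
k vectors, represented as a function on lists of vectors which vanishes on lists of
length different from k.\<close>

type_synonym 'n form = "(real^'n) list \<Rightarrow> real"

definition kforms :: "nat \<Rightarrow> ('n::finite) form set" where
  "kforms k = {\<alpha>.
     (\<forall>xs. length xs \<noteq> k \<longrightarrow> \<alpha> xs = 0) \<and>
     (\<forall>xs i u w (a::real) b. length xs = k \<and> i < k \<longrightarrow>
        \<alpha> (xs[i := a *\<^sub>R u + b *\<^sub>R w]) = a * \<alpha> (xs[i := u]) + b * \<alpha> (xs[i := w])) \<and>
     (\<forall>xs. length xs = k \<and> \<not> distinct xs \<longrightarrow> \<alpha> xs = 0)}"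

definition ip :: "real^('n::finite) \<Rightarrow> ('n::finite) form \<Rightarrow> ('n::finite) form" where
  "ip X \<alpha> = (\<lambda>xs. \<alpha> (X # xs))"

definition zform :: "('n::finite) form" where
  "zform = (\<lambda>_. 0)"

definition pairing :: "((real^('n::finite)) \<times> ('n::finite) form) \<Rightarrow> ((real^('n::finite)) \<times> ('n::finite) form) \<Rightarrow> ('n::finite) form" where
  "pairing p q = (\<lambda>xs. ip (fst p) (snd q) xs + ip (fst q) (snd p) xs)"

definition is_subspace :: "nat \<Rightarrow> ((real^('n::finite)) \<times> ('n::finite) form) set \<Rightarrow> bool" where
  "is_subspace k L \<longleftrightarrow>
     (\<forall>p\<in>L. snd p \<in> kforms k) \<and> (0, zform) \<in> L \<and>
     (\<forall>p\<in>L. \<forall>q\<in>L. (fst p + fst q, \<lambda>xs. snd p xs + snd q xs) \<in> L) \<and>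
     (\<forall>p\<in>L. \<forall>c::real. (c *\<^sub>R fst p, \<lambda>xs. c * snd p xs) \<in> L)"

definition Lperp :: "nat \<Rightarrow> ((real^('n::finite)) \<times> ('n::finite) form) set \<Rightarrow> ((real^('n::finite)) \<times> ('n::finite) form) set" where
  "Lperp k L = {q. snd q \<in> kforms k \<and> (\<forall>p\<in>L. pairing p q = zform)}"

definition isotropic :: "nat \<Rightarrow> ((real^('n::finite)) \<times> ('n::finite) form) set \<Rightarrow> bool" where
  "isotropic k L \<longleftrightarrow> L \<subseteq> Lperp k L"

definition Eproj :: "((real^('n::finite)) \<times> ('n::finite) form) set \<Rightarrow> (real^('n::finite)) set" where
  "Eproj L = fst ` L"

definition AL :: "((real^('n::finite)) \<times> ('n::finite) form) set \<Rightarrow> ('n::finite) form set" where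
  "AL L = {\<alpha>. (0, \<alpha>) \<in> L}"

definition LV :: "((real^('n::finite)) \<times> ('n::finite) form) set \<Rightarrow> (real^('n::finite)) set" where
  "LV L = {X. (X, zform) \<in> L}"

definition pr2 :: "((real^('n::finite)) \<times> ('n::finite) form) set \<Rightarrow> ('n::finite) form set" where
  "pr2 L = snd ` L"

definition Ann :: "nat \<Rightarrow> (real^('n::finite)) set \<Rightarrow> ('n::finite) form set" where
  "Ann k W = {\<alpha>\<in>kforms k. \<forall>Y\<in>W. ip Y \<alpha> = zform}"

definition circ :: "('n::finite) form set \<Rightarrow> (real^('n::finite)) set" where
  "circ S = {X. \<forall>\<eta>\<in>S. ip X \<eta> = zform}"

definition nonstandard :: "nat \<Rightarrow> ((real^('n::finite)) \<times> ('n::finite) form) set \<Rightarrow> bool" where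
  "nonstandard k L \<longleftrightarrow> isotropic k L \<and> circ (Ann k (Eproj L)) \<noteq> Eproj L"

definition C1 :: "nat \<Rightarrow> ((real^('n::finite)) \<times> ('n::finite) form) set \<Rightarrow> bool" where
  "C1 k L \<longleftrightarrow> L = Lperp k L"

definition C2w :: "nat \<Rightarrow> ((real^('n::finite)) \<times> ('n::finite) form) set \<Rightarrow> bool" where
  "C2w k L \<longleftrightarrow> isotropic k L \<and> LV L = circ (pr2 L)"

definition C2s :: "nat \<Rightarrow> ((real^('n::finite)) \<times> ('n::finite) form) set \<Rightarrow> bool" where
  "C2s k L \<longleftrightarrow> isotropic k L \<and> Ann k (LV L) = pr2 L"

definition C3w :: "nat \<Rightarrow> ((real^('n::finite)) \<times> ('n::finite) form) set \<Rightarrow> bool" where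
  "C3w k L \<longleftrightarrow> isotropic k L \<and> Eproj L = circ (AL L)"

definition C3s :: "nat \<Rightarrow> ((real^('n::finite)) \<times> ('n::finite) form) set \<Rightarrow> bool" where
  "C3s k L \<longleftrightarrow> isotropic k L \<and> Ann k (Eproj L) = AL L"

end

theory Submission
  imports Defs
begin



lemma kf_len: "\<alpha> \<in> kforms m \<Longrightarrow> length xs \<noteq> m \<Longrightarrow> \<alpha> xs = 0"
  unfolding kforms_def by blast

lemma kf_alt: "\<alpha> \<in> kforms m \<Longrightarrow> \<not> distinct xs \<Longrightarrow> \<alpha> xs = 0"
  unfolding kforms_def by blast

lemma kf_lin: "\<alpha> \<in> kforms m \<Longrightarrow> i < length xs \<Longrightarrow>
   \<alpha> (xs[i := a *\<^sub>R u + b *\<^sub>R w]) = a * \<alpha> (xs[i := u]) + b * \<alpha> (xs[i := w])"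
  unfolding kforms_def by (cases "length xs = m") auto

lemma kf_add: "\<alpha> \<in> kforms m \<Longrightarrow> i < length xs \<Longrightarrow>
   \<alpha> (xs[i := u + w]) = \<alpha> (xs[i := u]) + \<alpha> (xs[i := w])"
  using kf_lin[of \<alpha> m i xs 1 u 1 w] by simp

lemma kf_scale: "\<alpha> \<in> kforms m \<Longrightarrow> i < length xs \<Longrightarrow>
   \<alpha> (xs[i := a *\<^sub>R u]) = a * \<alpha> (xs[i := u])"
  using kf_lin[of \<alpha> m i xs a u 0 u] by simp

lemma kf_zero: "\<alpha> \<in> kforms m \<Longrightarrow> i < length xs \<Longrightarrow> \<alpha> (xs[i := 0]) = 0"
  using kf_scale[of \<alpha> m i xs 0 0] by simp

lemma kf_diff: "\<alpha> \<in> kforms m \<Longrightarrow> i < length xs \<Longrightarrow>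
   \<alpha> (xs[i := u - w]) = \<alpha> (xs[i := u]) - \<alpha> (xs[i := w])"
  using kf_lin[of \<alpha> m i xs 1 u "-1" w] by simp

lemma kf_rep: "\<alpha> \<in> kforms m \<Longrightarrow> i \<noteq> j \<Longrightarrow> i < length xs \<Longrightarrow> j < length xs \<Longrightarrow>
   \<alpha> (xs[i := v, j := v]) = 0"
  apply (rule kf_alt, assumption)
  apply (simp add: distinct_conv_nth)
  by (metis length_list_update nth_list_update_eq nth_list_update_neq)

lemma kf_swap: assumes "\<alpha> \<in> kforms m" "i \<noteq> j" "i < length xs" "j < length xs"
  shows "\<alpha> (xs[i := x, j := y]) = - \<alpha> (xs[i := y, j := x])"
proof -
  have "0 = \<alpha> (xs[i := x + y, j := x + y])" using kf_rep[OF assms] by simp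
  also have "\<dots> = \<alpha> (xs[j := x + y, i := x]) + \<alpha> (xs[j := x + y, i := y])"
    using assms by (simp add: list_update_swap kf_add)
  also have "\<dots> = \<alpha> (xs[i := x, j := x]) + \<alpha> (xs[i := x, j := y])
                 + (\<alpha> (xs[i := y, j := x]) + \<alpha> (xs[i := y, j := y]))"
    using assms by (simp add: list_update_swap kf_add)
  also have "\<dots> = \<alpha> (xs[i := x, j := y]) + \<alpha> (xs[i := y, j := x])"
    using kf_rep[OF assms] by simp
  finally show ?thesis by simp
qed

lemma kf_swap01: assumes "\<alpha> \<in> kforms m"
  shows "\<alpha> (x # y # r) = - \<alpha> (y # x # r)"
  using kf_swap[OF assms, of 0 1 "x # y # r" x y] by simp

lemma ip_kforms: assumes "\<alpha> \<in> kforms m" shows "ip X \<alpha> \<in> kforms (m - 1)"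
proof -
  have 1: "\<forall>xs. length xs \<noteq> m - 1 \<longrightarrow> ip X \<alpha> xs = 0"
    using assms by (auto simp: ip_def intro!: kf_len)
  have 2: "ip X \<alpha> (xs[i := a *\<^sub>R u + b *\<^sub>R w]) = a * ip X \<alpha> (xs[i := u]) + b * ip X \<alpha> (xs[i := w])"
    if "length xs = m - 1" "i < m - 1" for xs i a u b w
    using kf_lin[OF assms, of "Suc i" "X # xs" a u b w] that by (simp add: ip_def)
  have 3: "ip X \<alpha> xs = 0" if "\<not> distinct xs" for xs
    using kf_alt[OF assms, of "X # xs"] that by (simp add: ip_def)
  show ?thesis unfolding kforms_def using 1 2 3 by blast
qed

lemma zform_kforms: "zform \<in> kforms m"
  unfolding kforms_def zform_def by auto

lemma ip_zform[simp]: "ip X zform = zform"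
  by (simp add: ip_def zform_def)

lemma ip_zero_vec: "\<alpha> \<in> kforms m \<Longrightarrow> ip 0 \<alpha> = zform"
  unfolding ip_def zform_def using kf_zero[of \<alpha> m 0] by fastforce

lemma kf_add0: "\<alpha> \<in> kforms m \<Longrightarrow> \<alpha> ((v + w) # ws) = \<alpha> (v # ws) + \<alpha> (w # ws)"
  using kf_add[of \<alpha> m 0 "v # ws" v w] by simp
lemma kf_scale0: "\<alpha> \<in> kforms m \<Longrightarrow> \<alpha> ((a *\<^sub>R v) # ws) = a * \<alpha> (v # ws)"
  using kf_scale[of \<alpha> m 0 "v # ws" a v] by simp
lemma kf_add1: "\<alpha> \<in> kforms m \<Longrightarrow> \<alpha> (x # (v + w) # ws) = \<alpha> (x # v # ws) + \<alpha> (x # w # ws)"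
  using kf_add[of \<alpha> m 1 "x # v # ws" v w] by simp
lemma kf_scale1: "\<alpha> \<in> kforms m \<Longrightarrow> \<alpha> (x # (a *\<^sub>R v) # ws) = a * \<alpha> (x # v # ws)"
  using kf_scale[of \<alpha> m 1 "x # v # ws" a v] by simp
lemma kf_same01: "\<alpha> \<in> kforms m \<Longrightarrow> \<alpha> (x # x # ws) = 0"
  by (rule kf_alt[of _ m]) auto

lemma kf_comb: assumes "\<alpha> \<in> kforms m" "\<beta> \<in> kforms m"
  shows "(\<lambda>xs. \<alpha> xs + c * \<beta> xs) \<in> kforms m"
proof -
  have "(\<lambda>xs. \<alpha> xs + c * \<beta> xs) (xs[i := a *\<^sub>R u + b *\<^sub>R w]) =
      a * (\<lambda>xs. \<alpha> xs + c * \<beta> xs) (xs[i := u]) + b * (\<lambda>xs. \<alpha> xs + c * \<beta> xs) (xs[i := w])"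
    if "length xs = m" "i < m" for xs i a u b w
    using kf_lin[OF assms(1), of i xs a u b w] kf_lin[OF assms(2), of i xs a u b w] that
    by (simp add: algebra_simps)
  moreover have "\<forall>xs. length xs \<noteq> m \<longrightarrow> \<alpha> xs + c * \<beta> xs = 0"
    using kf_len[OF assms(1)] kf_len[OF assms(2)] by simp
  moreover have "\<forall>xs. length xs = m \<and> \<not> distinct xs \<longrightarrow> \<alpha> xs + c * \<beta> xs = 0"
    using kf_alt[OF assms(1)] kf_alt[OF assms(2)] by simp
  ultimately show ?thesis unfolding kforms_def mem_Collect_eq by blast
qed

lemma kf_smult: assumes "\<alpha> \<in> kforms m"
  shows "(\<lambda>xs. c * \<alpha> xs) \<in> kforms m"
  using kf_comb[OF zform_kforms assms, of c] by (simp add: zform_def)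

definition linE :: "(real^'n::finite) set \<Rightarrow> (real^'n \<Rightarrow> 'n form) \<Rightarrow> bool" where
  "linE E \<phi> \<longleftrightarrow> (\<forall>Y\<in>E. \<forall>Y'\<in>E. \<forall>a b. \<phi> (a *\<^sub>R Y + b *\<^sub>R Y') = (\<lambda>ws. a * \<phi> Y ws + b * \<phi> Y' ws))"

definition cpt :: "(real^'n::finite) set \<Rightarrow> (real^'n \<Rightarrow> 'n form) \<Rightarrow> bool" where
  "cpt E \<phi> \<longleftrightarrow> (\<forall>Y\<in>E. \<forall>Y'\<in>E. \<forall>ws. \<phi> Y (Y' # ws) = - \<phi> Y' (Y # ws))"

lemma linE_D: "linE E \<phi> \<Longrightarrow> Y \<in> E \<Longrightarrow> Y' \<in> E \<Longrightarrow>
  \<phi> (a *\<^sub>R Y + b *\<^sub>R Y') = (\<lambda>ws. a * \<phi> Y ws + b * \<phi> Y' ws)"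
  unfolding linE_def by blast

lemma cpt_D: "cpt E \<phi> \<Longrightarrow> Y \<in> E \<Longrightarrow> Y' \<in> E \<Longrightarrow> \<phi> Y (Y' # ws) = - \<phi> Y' (Y # ws)"
  unfolding cpt_def by blast

lemma cpt_self: "cpt E \<phi> \<Longrightarrow> Y \<in> E \<Longrightarrow> \<phi> Y (Y # ws) = 0"
proof -
  assume a: "cpt E \<phi>" "Y \<in> E"
  then have "\<phi> Y (Y # ws) = - \<phi> Y (Y # ws)" unfolding cpt_def by blast
  then show ?thesis by simp
qed

lemma cpt_mem: assumes "cpt E \<phi>" "Y \<in> E" "\<phi> Y \<in> kforms m" "Y \<in> set zs"
  shows "\<phi> Y zs = 0"
proof -
  obtain j where j: "j < length zs" "zs ! j = Y" using assms(4) by (metis in_set_conv_nth)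
  show ?thesis
  proof (cases j)
    case 0
    then obtain r where "zs = Y # r" using j by (cases zs) auto
    then show ?thesis using cpt_self[OF assms(1,2)] by simp
  next
    case (Suc j')
    have z0: "0 < length zs" using j(1) by (cases zs) auto
    have "\<phi> Y (zs[0 := zs ! 0, j := Y]) = - \<phi> Y (zs[0 := Y, j := zs ! 0])"
      by (rule kf_swap[OF assms(3)]) (use j Suc in auto)
    moreover have "zs[0 := zs ! 0, j := Y] = zs" using j by (metis list_update_id)
    moreover obtain r where "zs[0 := Y, j := zs ! 0] = Y # r"
      using z0 Suc by (cases zs) auto
    ultimately show ?thesis using cpt_self[OF assms(1,2)] by simp
  qed
qed

lemma ext_base:
  assumes d: "1 \<le> d" and kf: "\<forall>Y. \<phi> Y \<in> kforms (d - 1)" and lin: "linE UNIV \<phi>" and cp: "cpt UNIV \<phi>"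
  shows "\<exists>\<beta>\<in>kforms d. \<forall>Y. ip Y \<beta> = \<phi> Y"
proof -
  define \<beta> where "\<beta> xs = (if length xs = d then \<phi> (hd xs) (tl xs) else 0)" for xs
  have 1: "\<forall>xs. length xs \<noteq> d \<longrightarrow> \<beta> xs = 0" by (simp add: \<beta>_def)
  have 2: "\<beta> (xs[i := a *\<^sub>R u + b *\<^sub>R w]) = a * \<beta> (xs[i := u]) + b * \<beta> (xs[i := w])"
    if th: "length xs = d" "i < d" for xs i a u b w
  proof -
    obtain z zs where xs: "xs = z # zs" using th d by (cases xs) auto
    show ?thesis
    proof (cases i)
      case 0
      have "\<phi> (a *\<^sub>R u + b *\<^sub>R w) = (\<lambda>ws. a * \<phi> u ws + b * \<phi> w ws)"
        using lin unfolding linE_def by blast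
      then show ?thesis using th 0 xs by (simp add: \<beta>_def)
    next
      case (Suc j)
      have "j < length zs" using th xs Suc by simp
      then show ?thesis using th xs Suc kf_lin[OF kf[rule_format, of z], of j zs a u b w]
        by (simp add: \<beta>_def)
    qed
  qed
  have 3: "\<beta> xs = 0" if th: "length xs = d" "\<not> distinct xs" for xs
  proof -
    obtain z zs where xs: "xs = z # zs" using th d by (cases xs) auto
    show ?thesis
    proof (cases "z \<in> set zs")
      case True
      then show ?thesis using cpt_mem[OF cp _ kf[rule_format, of z]] xs th by (simp add: \<beta>_def)
    next
      case False
      then have "\<not> distinct zs" using th xs by simp
      then show ?thesis using kf_alt[OF kf[rule_format, of z]] xs th by (simp add: \<beta>_def)
    qed
  qed
  have bk: "\<beta> \<in> kforms d" unfolding kforms_def using 1 2 3 by blast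
  have "ip Y \<beta> = \<phi> Y" for Y
  proof
    fix xs
    show "ip Y \<beta> xs = \<phi> Y xs"
      using kf_len[OF kf[rule_format, of Y], of xs] d by (auto simp: ip_def \<beta>_def)
  qed
  then show ?thesis using bk by blast
qed


lemma func_exists:
  fixes E :: "(real^'n::finite) set"
  assumes "subspace E" "u \<notin> E"
  obtains f :: "real^'n \<Rightarrow> real" where "linear f" "\<forall>y\<in>E. f y = 0" "f u = 1"
proof -
  obtain y z where y: "y \<in> span E" and z: "\<And>w. w \<in> span E \<Longrightarrow> orthogonal z w" and u: "u = y + z"
    using orthogonal_subspace_decomp_exists by blast
  have yE: "y \<in> E" using y assms(1) by (metis span_eq_iff)
  have z0: "z \<noteq> 0" using u yE assms(2) by auto
  have zz: "inner z z \<noteq> 0" using z0 by simp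
  have zy: "inner z y = 0" using z[OF y] by (simp add: orthogonal_def)
  define f where "f v = inner z v / inner z z" for v
  have "linear f" unfolding f_def
    by (rule linearI) (auto simp: inner_add_right add_divide_distrib)
  moreover have "\<forall>w\<in>E. f w = 0" using z[OF span_base] by (simp add: f_def orthogonal_def)
  moreover have "f u = 1" using zz zy u by (simp add: f_def inner_add_right)
  ultimately show ?thesis using that by blast
qed

lemma ext_lemma:
  "\<forall>(E::(real^'n::finite) set) d \<phi>. subspace E \<and> CARD('n) - dim E = c \<and> 1 \<le> d \<and>
     (\<forall>Y\<in>E. \<phi> Y \<in> kforms (d - 1)) \<and> linE E \<phi> \<and> cpt E \<phi> \<longrightarrow>
     (\<exists>\<beta>\<in>kforms d. \<forall>Y\<in>E. ip Y \<beta> = \<phi> Y)"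
proof (induction c)
  case 0
  show ?case
  proof (intro allI impI)
    fix E :: "(real^'n) set" and d \<phi>
    assume a: "subspace E \<and> CARD('n) - dim E = 0 \<and> 1 \<le> d \<and>
     (\<forall>Y\<in>E. \<phi> Y \<in> kforms (d - 1)) \<and> linE E \<phi> \<and> cpt E \<phi>"
    have "dim E = CARD('n)" using a dim_subset_UNIV_cart[of E] by linarith
    then have "span E = UNIV" using dim_eq_full[of E] by simp
    then have EU: "E = UNIV" using a by (metis span_eq_iff)
    show "\<exists>\<beta>\<in>kforms d. \<forall>Y\<in>E. ip Y \<beta> = \<phi> Y"
      using ext_base[of d \<phi>] a EU by auto
  qed
next
  case (Suc c)
  show ?case
  proof (intro allI impI)
    fix E :: "(real^'n) set" and d \<phi>
    assume a: "subspace E \<and> CARD('n) - dim E = Suc c \<and> 1 \<le> d \<and>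
     (\<forall>Y\<in>E. \<phi> Y \<in> kforms (d - 1)) \<and> linE E \<phi> \<and> cpt E \<phi>"
    have sE: "subspace E" and d1: "1 \<le> d" and kf: "\<And>Y. Y \<in> E \<Longrightarrow> \<phi> Y \<in> kforms (d - 1)"
      and lin: "linE E \<phi>" and cp: "cpt E \<phi>" using a by auto
    have "E \<noteq> UNIV"
    proof
      assume "E = UNIV"
      then have "dim E = CARD('n)" using dim_UNIV by simp
      then show False using a by simp
    qed
    then obtain u where uE: "u \<notin> E" by blast
    obtain f :: "real^'n \<Rightarrow> real" where fl: "linear f" and f0: "\<forall>y\<in>E. f y = 0" and fu: "f u = 1"
      using func_exists[OF sE uE] by blast
    define E' where "E' = span (insert u E)"
    have sE': "subspace E'" unfolding E'_def by simp
    have "dim E' = dim E + 1" proof -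
      have "u \<notin> span E" using uE sE by (metis span_eq_iff)
      then show ?thesis unfolding E'_def dim_span using dim_insert[of u E] by simp
    qed
    moreover have "CARD('n) - dim E = Suc c" using a by blast
    ultimately have cE': "CARD('n) - dim E' = c" by linarith
    have EE': "E \<subseteq> E'" unfolding E'_def using span_superset[of "insert u E"] by blast
    have uE': "u \<in> E'" unfolding E'_def by (simp add: span_base)
    define pE where "pE Y = Y - f Y *\<^sub>R u" for Y
    have flin: "f (a *\<^sub>R Y + b *\<^sub>R Y') = a * f Y + b * f Y'" for a b Y Y'
      using fl by (simp add: linear_add linear_scale)
    have plin: "pE (a *\<^sub>R Y + b *\<^sub>R Y') = a *\<^sub>R pE Y + b *\<^sub>R pE Y'" for a b Y Y'
      unfolding pE_def flin by (simp add: algebra_simps)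
    have pin: "pE Y \<in> E" if "Y \<in> E'" for Y
    proof -
      have "\<exists>t. Y - t *\<^sub>R u \<in> span E" using that unfolding E'_def span_breakdown_eq .
      then obtain t where "Y - t *\<^sub>R u \<in> span E" by blast
      then have t: "Y - t *\<^sub>R u \<in> E" using sE by (metis span_eq_iff)
      have "f (Y - t *\<^sub>R u) = 0" using f0 t by blast
      then have "f Y = t" using flin[of 1 Y "-t" u] fu by simp
      then show ?thesis using t by (simp add: pE_def)
    qed
    have pid: "pE Y = Y" if "Y \<in> E" for Y using f0 that by (simp add: pE_def)
    have dec0: "\<alpha> \<in> kforms m \<Longrightarrow> \<alpha> (Y # ws) = \<alpha> (pE Y # ws) + f Y * \<alpha> (u # ws)" for \<alpha> m Y ws
    proof -
      assume ak: "\<alpha> \<in> kforms m"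
      have "\<alpha> (Y # ws) = \<alpha> ((pE Y + f Y *\<^sub>R u) # ws)" by (simp add: pE_def)
      also have "\<dots> = \<alpha> (pE Y # ws) + f Y * \<alpha> (u # ws)" by (simp add: kf_add0[OF ak] kf_scale0[OF ak])
      finally show ?thesis .
    qed
    have dec1: "\<alpha> \<in> kforms m \<Longrightarrow> \<alpha> (x # Y # ws) = \<alpha> (x # pE Y # ws) + f Y * \<alpha> (x # u # ws)" for \<alpha> m x Y ws
    proof -
      assume ak: "\<alpha> \<in> kforms m"
      have "\<alpha> (x # Y # ws) = \<alpha> (x # (pE Y + f Y *\<^sub>R u) # ws)" by (simp add: pE_def)
      also have "\<dots> = \<alpha> (x # pE Y # ws) + f Y * \<alpha> (x # u # ws)" by (simp add: kf_add1[OF ak] kf_scale1[OF ak])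
      finally show ?thesis .
    qed
    obtain \<psi> where \<psi>k: "\<psi> \<in> kforms (d - 1)"
      and \<psi>p: "\<And>Y ws. Y \<in> E' \<Longrightarrow> \<psi> (Y # ws) = - \<phi> (pE Y) (u # ws)"
    proof (cases "d = 1")
      case True
      have "zform (Y # ws) = - \<phi> (pE Y) (u # ws)" if "Y \<in> E'" for Y ws
        using kf_len[OF kf[OF pin[OF that]], of "u # ws"] True by (simp add: zform_def)
      then show ?thesis by (rule that[OF zform_kforms])
    next
      case False
      define \<phi>t where "\<phi>t Y = (\<lambda>ws. (-1) * ip u (\<phi> (pE Y)) ws)" for Y
      have k1: "\<phi>t Y \<in> kforms (d - 1 - 1)" if "Y \<in> E'" for Y
        unfolding \<phi>t_def by (rule kf_smult, rule ip_kforms, rule kf, rule pin, rule that)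
      have l1: "linE E' \<phi>t" unfolding linE_def
      proof (intro ballI allI)
        fix Y Y' a b assume Y: "Y \<in> E'" and Y': "Y' \<in> E'"
        have "\<phi> (pE (a *\<^sub>R Y + b *\<^sub>R Y')) = (\<lambda>ws. a * \<phi> (pE Y) ws + b * \<phi> (pE Y') ws)"
          unfolding plin by (rule linE_D[OF lin pin[OF Y] pin[OF Y']])
        then show "\<phi>t (a *\<^sub>R Y + b *\<^sub>R Y') = (\<lambda>ws. a * \<phi>t Y ws + b * \<phi>t Y' ws)"
          unfolding \<phi>t_def ip_def by (simp add: algebra_simps)
      qed
      have c1: "cpt E' \<phi>t" unfolding cpt_def
      proof (intro ballI allI)
        fix Y Y' ws assume Y: "Y \<in> E'" and Y': "Y' \<in> E'"
        have kY: "\<phi> (pE Y) \<in> kforms (d - 1)" by (rule kf[OF pin[OF Y]])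
        have kY': "\<phi> (pE Y') \<in> kforms (d - 1)" by (rule kf[OF pin[OF Y']])
        have e1: "\<phi>t Y (Y' # ws) = \<phi> (pE Y) (pE Y' # u # ws)"
        proof -
          have "\<phi>t Y (Y' # ws) = - \<phi> (pE Y) (u # Y' # ws)" by (simp add: \<phi>t_def ip_def)
          also have "\<dots> = - \<phi> (pE Y) (u # pE Y' # ws)"
            using dec1[OF kY, of u Y' ws] kf_same01[OF kY] by simp
          also have "\<dots> = \<phi> (pE Y) (pE Y' # u # ws)" using kf_swap01[OF kY, of u "pE Y'" ws] by simp
          finally show ?thesis .
        qed
        have e2: "\<phi>t Y' (Y # ws) = \<phi> (pE Y') (pE Y # u # ws)"
        proof -
          have "\<phi>t Y' (Y # ws) = - \<phi> (pE Y') (u # Y # ws)" by (simp add: \<phi>t_def ip_def)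
          also have "\<dots> = - \<phi> (pE Y') (u # pE Y # ws)"
            using dec1[OF kY', of u Y ws] kf_same01[OF kY'] by simp
          also have "\<dots> = \<phi> (pE Y') (pE Y # u # ws)" using kf_swap01[OF kY', of u "pE Y" ws] by simp
          finally show ?thesis .
        qed
        have "\<phi> (pE Y) (pE Y' # u # ws) = - \<phi> (pE Y') (pE Y # u # ws)"
          by (rule cpt_D[OF cp pin[OF Y] pin[OF Y']])
        then show "\<phi>t Y (Y' # ws) = - \<phi>t Y' (Y # ws)" using e1 e2 by simp
      qed
      have "1 \<le> d - 1" using d1 False by simp
      then have "subspace E' \<and> CARD('n) - dim E' = c \<and> 1 \<le> d - 1 \<and>
        (\<forall>Y\<in>E'. \<phi>t Y \<in> kforms (d - 1 - 1)) \<and> linE E' \<phi>t \<and> cpt E' \<phi>t"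
        using sE' cE' k1 l1 c1 by blast
      then obtain \<psi> where \<psi>k: "\<psi> \<in> kforms (d - 1)" and \<psi>i: "\<forall>Y\<in>E'. ip Y \<psi> = \<phi>t Y"
        using Suc.IH[rule_format, of E' "d - 1" \<phi>t] by blast
      have "\<psi> (Y # ws) = - \<phi> (pE Y) (u # ws)" if "Y \<in> E'" for Y ws
      proof -
        have "\<psi> (Y # ws) = ip Y \<psi> ws" by (simp add: ip_def)
        also have "\<dots> = \<phi>t Y ws" using \<psi>i that by simp
        finally show ?thesis by (simp add: \<phi>t_def ip_def)
      qed
      then show ?thesis by (rule that[OF \<psi>k])
    qed
    define \<phi>' where "\<phi>' Y = (\<lambda>ws. \<phi> (pE Y) ws + f Y * \<psi> ws)" for Y
    have k2: "\<phi>' Y \<in> kforms (d - 1)" if "Y \<in> E'" for Y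
      unfolding \<phi>'_def by (rule kf_comb[OF kf[OF pin[OF that]] \<psi>k])
    have l2: "linE E' \<phi>'" unfolding linE_def
    proof (intro ballI allI)
      fix Y Y' a b assume Y: "Y \<in> E'" and Y': "Y' \<in> E'"
      have "\<phi> (pE (a *\<^sub>R Y + b *\<^sub>R Y')) = (\<lambda>ws. a * \<phi> (pE Y) ws + b * \<phi> (pE Y') ws)"
        unfolding plin by (rule linE_D[OF lin pin[OF Y] pin[OF Y']])
      then show "\<phi>' (a *\<^sub>R Y + b *\<^sub>R Y') = (\<lambda>ws. a * \<phi>' Y ws + b * \<phi>' Y' ws)"
        unfolding \<phi>'_def flin by (simp add: algebra_simps)
    qed
    have c2: "cpt E' \<phi>'" unfolding cpt_def
    proof (intro ballI allI)
      fix Y Y' ws assume Y: "Y \<in> E'" and Y': "Y' \<in> E'"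
      have kY: "\<phi> (pE Y) \<in> kforms (d - 1)" by (rule kf[OF pin[OF Y]])
      have kY': "\<phi> (pE Y') \<in> kforms (d - 1)" by (rule kf[OF pin[OF Y']])
      have e1: "\<phi>' Y (Y' # ws) = \<phi> (pE Y) (pE Y' # ws) + f Y' * \<phi> (pE Y) (u # ws) - f Y * \<phi> (pE Y') (u # ws)"
        unfolding \<phi>'_def using dec0[OF kY, of Y' ws] \<psi>p[OF Y'] by simp
      have e2: "\<phi>' Y' (Y # ws) = \<phi> (pE Y') (pE Y # ws) + f Y * \<phi> (pE Y') (u # ws) - f Y' * \<phi> (pE Y) (u # ws)"
        unfolding \<phi>'_def using dec0[OF kY', of Y ws] \<psi>p[OF Y] by simp
      have "\<phi> (pE Y) (pE Y' # ws) = - \<phi> (pE Y') (pE Y # ws)"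
        by (rule cpt_D[OF cp pin[OF Y] pin[OF Y']])
      then show "\<phi>' Y (Y' # ws) = - \<phi>' Y' (Y # ws)" using e1 e2 by simp
    qed
    have "subspace E' \<and> CARD('n) - dim E' = c \<and> 1 \<le> d \<and>
        (\<forall>Y\<in>E'. \<phi>' Y \<in> kforms (d - 1)) \<and> linE E' \<phi>' \<and> cpt E' \<phi>'"
      using sE' cE' d1 k2 l2 c2 by blast
    then obtain \<beta> where \<beta>k: "\<beta> \<in> kforms d" and \<beta>i: "\<forall>Y\<in>E'. ip Y \<beta> = \<phi>' Y"
      using Suc.IH[rule_format, of E' d \<phi>'] by blast
    have "ip Y \<beta> = \<phi> Y" if "Y \<in> E" for Y
    proof -
      have "ip Y \<beta> = \<phi>' Y" using \<beta>i EE' that by blast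
      also have "\<dots> = \<phi> Y" using pid[OF that] f0 that by (simp add: \<phi>'_def)
      finally show ?thesis .
    qed
    then show "\<exists>\<beta>\<in>kforms d. \<forall>Y\<in>E. ip Y \<beta> = \<phi> Y" using \<beta>k by blast
  qed
qed






lemma sub_snd: "is_subspace k L \<Longrightarrow> p \<in> L \<Longrightarrow> snd p \<in> kforms k"
  unfolding is_subspace_def by blast
lemma sub_zero: "is_subspace k L \<Longrightarrow> (0, zform) \<in> L"
  unfolding is_subspace_def by blast
lemma sub_add: "is_subspace k L \<Longrightarrow> p \<in> L \<Longrightarrow> q \<in> L \<Longrightarrow> (fst p + fst q, \<lambda>xs. snd p xs + snd q xs) \<in> L"
  unfolding is_subspace_def by blast
lemma sub_scale: "is_subspace k L \<Longrightarrow> p \<in> L \<Longrightarrow> (c *\<^sub>R fst p, \<lambda>xs. c * snd p xs) \<in> L"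
  unfolding is_subspace_def by blast
lemma iso_pair: "isotropic k L \<Longrightarrow> p \<in> L \<Longrightarrow> q \<in> L \<Longrightarrow> pairing p q = zform"
  unfolding isotropic_def Lperp_def by blast

lemma E_subspace: assumes "is_subspace k L" shows "subspace (Eproj L)"
  unfolding subspace_def Eproj_def
proof (intro conjI ballI allI)
  show "0 \<in> fst ` L" using sub_zero[OF assms] by force
  fix x y assume "x \<in> fst ` L" "y \<in> fst ` L"
  then obtain p q where "p \<in> L" "q \<in> L" "x = fst p" "y = fst q" by blast
  then show "x + y \<in> fst ` L" using sub_add[OF assms, of p q] by force
next
  fix c x assume "x \<in> fst ` L"
  then obtain p where "p \<in> L" "x = fst p" by blast
  then show "c *\<^sub>R x \<in> fst ` L" using sub_scale[OF assms, of p c] by force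
qed

lemma AL_sub_Ann: assumes "is_subspace k L" "isotropic k L"
  shows "AL L \<subseteq> Ann k (Eproj L)"
proof
  fix \<alpha> assume "\<alpha> \<in> AL L"
  then have a: "(0, \<alpha>) \<in> L" by (simp add: AL_def)
  have ak: "\<alpha> \<in> kforms k" using sub_snd[OF assms(1) a] by simp
  have "ip Y \<alpha> = zform" if Y: "Y \<in> Eproj L" for Y
  proof -
    obtain \<beta> where b: "(Y, \<beta>) \<in> L" using Y unfolding Eproj_def by force
    have bk: "\<beta> \<in> kforms k" using sub_snd[OF assms(1) b] by simp
    have "pairing (Y, \<beta>) (0, \<alpha>) = zform" by (rule iso_pair[OF assms(2) b a])
    then have "(\<lambda>xs. ip Y \<alpha> xs + ip 0 \<beta> xs) = zform" by (simp add: pairing_def)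
    then show ?thesis using ip_zero_vec[OF bk] by (simp add: zform_def)
  qed
  then show "\<alpha> \<in> Ann k (Eproj L)" using ak by (simp add: Ann_def)
qed

lemma E_sub_circ: "E \<subseteq> circ (Ann k E)"
  unfolding circ_def Ann_def by blast

lemma zform_Ann: "zform \<in> Ann k E"
  unfolding Ann_def using zform_kforms by simp

lemma ext_use:
  fixes E :: "(real^'n::finite) set"
  assumes "subspace E" "1 \<le> d" "\<forall>Y\<in>E. \<phi> Y \<in> kforms (d - 1)" "linE E \<phi>" "cpt E \<phi>"
  shows "\<exists>\<beta>\<in>kforms d. \<forall>Y\<in>E. ip Y \<beta> = \<phi> Y"
  using ext_lemma[of "CARD('n) - dim E"] assms by blast

lemma circ_Ann_sub:
  fixes E :: "(real^'n::finite) set"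
  assumes sE: "subspace E" and k1: "1 \<le> k" and \<alpha>A: "\<alpha> \<in> Ann k E" and \<alpha>0: "\<alpha> \<noteq> zform"
  shows "circ (Ann k E) \<subseteq> E"
proof
  fix X assume XC: "X \<in> circ (Ann k E)"
  show "X \<in> E"
  proof (rule ccontr)
    assume XE: "X \<notin> E"
    have ak: "\<alpha> \<in> kforms k" using \<alpha>A by (simp add: Ann_def)
    have \<alpha>E: "\<And>Y zs. Y \<in> E \<Longrightarrow> \<alpha> (Y # zs) = 0"
      using \<alpha>A unfolding Ann_def ip_def zform_def by (metis (mono_tags, lifting) mem_Collect_eq)
    have \<alpha>X: "\<alpha> (X # zs) = 0" for zs
      using XC \<alpha>A unfolding circ_def ip_def zform_def by (metis (mono_tags, lifting) mem_Collect_eq)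
    define E' where "E' = span (insert X E)"
    have sE': "subspace E'" unfolding E'_def by simp
    have \<alpha>E': "\<alpha> (Y # zs) = 0" if "Y \<in> E'" for Y zs
    proof -
      have "\<exists>t. Y - t *\<^sub>R X \<in> span E" using \<open>Y \<in> E'\<close> unfolding E'_def span_breakdown_eq .
      then obtain t where "Y - t *\<^sub>R X \<in> span E" by blast
      then have t: "Y - t *\<^sub>R X \<in> E" using sE by (metis span_eq_iff)
      have "\<alpha> (Y # zs) = \<alpha> (((Y - t *\<^sub>R X) + t *\<^sub>R X) # zs)" by simp
      also have "\<dots> = \<alpha> ((Y - t *\<^sub>R X) # zs) + t * \<alpha> (X # zs)" by (simp only: kf_add0[OF ak] kf_scale0[OF ak])
      also have "\<dots> = 0" using \<alpha>E[OF t] \<alpha>X by simp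
      finally show ?thesis .
    qed
    obtain xs where xs: "\<alpha> xs \<noteq> 0" using \<alpha>0 unfolding zform_def by meson
    have "length xs = k" using kf_len[OF ak] xs by blast
    then obtain v vs where vvs: "xs = v # vs" using k1 by (cases xs) auto
    define \<gamma> where "\<gamma> = ip v \<alpha>"
    have \<gamma>k: "\<gamma> \<in> kforms (k - 1)" unfolding \<gamma>_def by (rule ip_kforms[OF ak])
    have \<gamma>vs: "\<gamma> vs \<noteq> 0" using xs vvs by (simp add: \<gamma>_def ip_def)
    have \<gamma>E': "\<gamma> (Y # ws) = 0" if "Y \<in> E'" for Y ws
    proof -
      have "\<gamma> (Y # ws) = \<alpha> (v # Y # ws)" by (simp add: \<gamma>_def ip_def)
      also have "\<dots> = - \<alpha> (Y # v # ws)" by (rule kf_swap01[OF ak])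
      also have "\<dots> = 0" using \<alpha>E'[OF that] by simp
      finally show ?thesis .
    qed
    obtain f :: "real^'n \<Rightarrow> real" where fl: "linear f" and f0: "\<forall>y\<in>E. f y = 0" and fX: "f X = 1"
      using func_exists[OF sE XE] by blast
    define \<phi> where "\<phi> Y = (\<lambda>ws. f Y * \<gamma> ws)" for Y
    have k2: "\<forall>Y\<in>E'. \<phi> Y \<in> kforms (k - 1)" unfolding \<phi>_def using kf_smult[OF \<gamma>k] by blast
    have l2: "linE E' \<phi>" unfolding linE_def \<phi>_def
      using fl by (simp add: linear_add linear_scale algebra_simps)
    have c2: "cpt E' \<phi>" unfolding cpt_def \<phi>_def using \<gamma>E' by simp
    obtain \<beta> where \<beta>k: "\<beta> \<in> kforms k" and \<beta>i: "\<forall>Y\<in>E'. ip Y \<beta> = \<phi> Y"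
      using ext_use[OF sE' k1 k2 l2 c2] by blast
    have EE': "E \<subseteq> E'" unfolding E'_def using span_superset[of "insert X E"] by blast
    have XE': "X \<in> E'" unfolding E'_def by (simp add: span_base)
    have "\<beta> \<in> Ann k E"
      unfolding Ann_def using \<beta>k \<beta>i EE' f0 by (auto simp: \<phi>_def zform_def)
    then have "ip X \<beta> = zform" using XC unfolding circ_def by blast
    moreover have "ip X \<beta> = \<gamma>" using \<beta>i XE' fX by (simp add: \<phi>_def)
    ultimately show False using \<gamma>vs by (simp add: zform_def)
  qed
qed

lemma Ann_zero:
  assumes "is_subspace k L" "nonstandard k L" "1 \<le> k"
  shows "Ann k (Eproj L) = {zform}"
proof (rule ccontr)
  assume "Ann k (Eproj L) \<noteq> {zform}"
  then obtain \<alpha> where "\<alpha> \<in> Ann k (Eproj L)" "\<alpha> \<noteq> zform" using zform_Ann by blast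
  then have "circ (Ann k (Eproj L)) \<subseteq> Eproj L"
    using circ_Ann_sub[OF E_subspace[OF assms(1)] assms(3)] by blast
  then have "circ (Ann k (Eproj L)) = Eproj L" using E_sub_circ by blast
  then show False using assms(2) by (simp add: nonstandard_def)
qed




lemma part1:
  fixes L :: "((real^('n::finite)) \<times> ('n::finite) form) set"
  assumes sub: "is_subspace k L" and ns: "nonstandard k L" and k1: "1 \<le> k"
  shows "C3s k L \<and> \<not> C3w k L \<and> \<not> C1 k L"
proof -
  have iso: "isotropic k L" using ns by (simp add: nonstandard_def)
  have A0: "Ann k (Eproj L) = {zform}" by (rule Ann_zero[OF sub ns k1])
  have AL0: "AL L = {zform}"
    using AL_sub_Ann[OF sub iso] A0 sub_zero[OF sub] by (auto simp: AL_def)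
  have c3s: "C3s k L" using iso A0 AL0 by (simp add: C3s_def)
  have nc3w: "\<not> C3w k L"
  proof
    assume "C3w k L"
    then have "Eproj L = circ (AL L)" by (simp add: C3w_def)
    then have "circ (Ann k (Eproj L)) = Eproj L" using A0 AL0 by simp
    then show False using ns by (simp add: nonstandard_def)
  qed
  have EU: "Eproj L \<noteq> UNIV"
  proof
    assume "Eproj L = UNIV"
    then have "circ (Ann k (Eproj L)) = Eproj L" using E_sub_circ[of "Eproj L" k] by blast
    then show False using ns by (simp add: nonstandard_def)
  qed
  have nc1: "\<not> C1 k L"
  proof
    assume c1: "C1 k L"
    obtain X where XE: "X \<notin> Eproj L" using EU by blast
    define E where "E = Eproj L"
    have sE: "subspace E" unfolding E_def by (rule E_subspace[OF sub])
    have uniq: "\<gamma> = \<gamma>'" if "(Y, \<gamma>) \<in> L" "(Y, \<gamma>') \<in> L" for Y \<gamma> \<gamma>'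
    proof -
      have "(Y + (-1) *\<^sub>R Y, \<lambda>xs. \<gamma> xs + (-1) * \<gamma>' xs) \<in> L"
        using sub_add[OF sub that(1) sub_scale[OF sub that(2), of "-1"]] by simp
      then have "(0, \<lambda>xs. \<gamma> xs - \<gamma>' xs) \<in> L" by simp
      then have "(\<lambda>xs. \<gamma> xs - \<gamma>' xs) \<in> AL L" by (simp add: AL_def)
      then have "(\<lambda>xs. \<gamma> xs - \<gamma>' xs) = zform" using AL0 by blast
      then show ?thesis unfolding zform_def by (simp add: fun_eq_iff)
    qed
    define g where "g Y = (SOME \<gamma>. (Y, \<gamma>) \<in> L)" for Y
    have gL: "(Y, g Y) \<in> L" if Y: "Y \<in> E" for Y
    proof -
      obtain \<gamma> where "(Y, \<gamma>) \<in> L" using Y unfolding E_def Eproj_def by (metis imageE prod.collapse)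
      then show ?thesis unfolding g_def by (rule someI[where P="\<lambda>\<gamma>. (Y, \<gamma>) \<in> L"])
    qed
    have gu: "g Y = \<gamma>" if "(Y, \<gamma>) \<in> L" for Y \<gamma>
    proof -
      have "Y \<in> E" using that unfolding E_def Eproj_def by (metis fst_conv image_eqI)
      then show ?thesis using uniq[OF gL that] by simp
    qed
    have gk: "g Y \<in> kforms k" if "Y \<in> E" for Y using sub_snd[OF sub gL[OF that]] by simp
    have glin: "g (a *\<^sub>R Y + b *\<^sub>R Y') = (\<lambda>xs. a * g Y xs + b * g Y' xs)" if "Y \<in> E" "Y' \<in> E" for a b Y Y'
    proof -
      have "(a *\<^sub>R Y + b *\<^sub>R Y', \<lambda>xs. a * g Y xs + b * g Y' xs) \<in> L"
        using sub_add[OF sub sub_scale[OF sub gL[OF that(1)], of a] sub_scale[OF sub gL[OF that(2)], of b]]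
        by simp
      then show ?thesis by (rule gu)
    qed
    have giso: "g Y (Y' # zs) = - g Y' (Y # zs)" if "Y \<in> E" "Y' \<in> E" for Y Y' zs
    proof -
      have "pairing (Y', g Y') (Y, g Y) = zform" by (rule iso_pair[OF iso gL[OF that(2)] gL[OF that(1)]])
      then have "(\<lambda>xs. g Y (Y' # xs) + g Y' (Y # xs)) = zform" by (simp add: pairing_def ip_def)
      then have "g Y (Y' # zs) + g Y' (Y # zs) = 0" unfolding zform_def by metis
      then show ?thesis by simp
    qed
    define \<phi> where "\<phi> Y = (\<lambda>ws. (-1) * ip X (g Y) ws)" for Y
    have k2: "\<forall>Y\<in>E. \<phi> Y \<in> kforms (k - 1)" unfolding \<phi>_def
      using kf_smult[OF ip_kforms[OF gk]] by blast
    have l2: "linE E \<phi>" unfolding linE_def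
    proof (intro ballI allI)
      fix Y Y' a b assume "Y \<in> E" "Y' \<in> E"
      then show "\<phi> (a *\<^sub>R Y + b *\<^sub>R Y') = (\<lambda>ws. a * \<phi> Y ws + b * \<phi> Y' ws)"
        unfolding \<phi>_def glin[OF \<open>Y \<in> E\<close> \<open>Y' \<in> E\<close>] ip_def by (simp add: algebra_simps)
    qed
    have c2: "cpt E \<phi>" unfolding cpt_def
    proof (intro ballI allI)
      fix Y Y' ws assume Y: "Y \<in> E" and Y': "Y' \<in> E"
      have "\<phi> Y (Y' # ws) = g Y (Y' # X # ws)"
        using kf_swap01[OF gk[OF Y], of X Y' ws] by (simp add: \<phi>_def ip_def)
      moreover have "\<phi> Y' (Y # ws) = g Y' (Y # X # ws)"
        using kf_swap01[OF gk[OF Y'], of X Y ws] by (simp add: \<phi>_def ip_def)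
      ultimately show "\<phi> Y (Y' # ws) = - \<phi> Y' (Y # ws)" using giso[OF Y Y', of "X # ws"] by simp
    qed
    obtain \<beta> where \<beta>k: "\<beta> \<in> kforms k" and \<beta>i: "\<forall>Y\<in>E. ip Y \<beta> = \<phi> Y"
      using ext_use[OF sE k1 k2 l2 c2] by blast
    have "(X, \<beta>) \<in> Lperp k L"
      unfolding Lperp_def
    proof (intro CollectI conjI ballI)
      show "snd (X, \<beta>) \<in> kforms k" using \<beta>k by simp
      fix p assume p: "p \<in> L"
      obtain Y \<gamma> where pY: "p = (Y, \<gamma>)" by (cases p)
      have Y: "Y \<in> E" using p pY unfolding E_def Eproj_def by force
      have "\<gamma> = g Y" using gu p pY by simp
      then show "pairing p (X, \<beta>) = zform"
        using \<beta>i Y pY by (simp add: pairing_def \<phi>_def zform_def ip_def)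
    qed
    then have "(X, \<beta>) \<in> L" using c1 by (simp add: C1_def)
    then have "X \<in> Eproj L" unfolding Eproj_def by force
    then show False using XE by simp
  qed
  show ?thesis using c3s nc3w nc1 by blast
qed




definition Pm :: "('n::finite \<Rightarrow> nat) \<Rightarrow> nat \<Rightarrow> real^'n \<Rightarrow> real^'n" where
  "Pm h k y = (\<chi> j. if h j \<le> k then y $ j else 0)"

definition OmM :: "('n::finite \<Rightarrow> nat) \<Rightarrow> nat \<Rightarrow> (real^'n) list \<Rightarrow> real^'n^'n" where
  "OmM h k xs = (\<chi> i. if h i \<le> k then Pm h k (xs ! h i) else axis i 1)"

definition Om :: "('n::finite \<Rightarrow> nat) \<Rightarrow> nat \<Rightarrow> 'n form" where
  "Om h k xs = (if length xs = Suc k then det (OmM h k xs) else 0)"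

lemma bij_hinv: assumes "bij_betw h (UNIV::'n::finite set) {0..<CARD('n)}" "m < CARD('n)"
  shows "h (inv h m) = m"
proof -
  have "m \<in> h ` UNIV" using assms by (simp add: bij_betw_def)
  then show ?thesis by (rule f_inv_into_f)
qed

lemma row_eq: "row i A = A $ i" by (simp add: row_def vec_eq_iff)

lemma Pm_lin: "Pm h k (a *\<^sub>R u + b *\<^sub>R w) = a *s Pm h k u + b *s Pm h k w"
  by (simp add: Pm_def vec_eq_iff)

lemma OmM_upd: assumes "inj h" "h i0 = i" "i \<le> k" "i < length xs"
  shows "OmM h k (xs[i := v]) = (\<chi> r. if r = i0 then Pm h k v else OmM h k xs $ r)"
proof -
  have "xs[i := v] ! h r = xs ! h r" if "r \<noteq> i0" for r
  proof -
    have "h r \<noteq> i" using assms(1,2) that by (metis injD)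
    then show ?thesis by simp
  qed
  note * = this
  show ?thesis
  proof (rule vec_eq_iff[THEN iffD2], intro allI)
    fix r
    show "OmM h k (xs[i := v]) $ r = (\<chi> r. if r = i0 then Pm h k v else OmM h k xs $ r) $ r"
    proof (cases "r = i0")
      case True then show ?thesis using assms by (simp add: OmM_def)
    next
      case False then show ?thesis using *[OF False] by (simp add: OmM_def)
    qed
  qed
qed

lemma Om_kforms: assumes H: "bij_betw h (UNIV::'n::finite set) {0..<CARD('n)}" and kn: "k < CARD('n)"
  shows "Om h k \<in> kforms (Suc k)"
proof -
  have ih: "inj h" using H by (simp add: bij_betw_def)
  have hinv: "h (inv h m) = m" if "m < CARD('n)" for m
    by (rule bij_hinv[OF H that])
  have 1: "\<forall>xs. length xs \<noteq> Suc k \<longrightarrow> Om h k xs = 0" by (simp add: Om_def)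
  have 2: "Om h k (xs[i := a *\<^sub>R u + b *\<^sub>R w]) = a * Om h k (xs[i := u]) + b * Om h k (xs[i := w])"
    if th: "length xs = Suc k" "i < Suc k" for xs i a u b w
  proof -
    define i0 where "i0 = inv h i"
    have hi0: "h i0 = i" unfolding i0_def using hinv th kn by simp
    have ik: "i \<le> k" "i < length xs" using th by auto
    note eqM = OmM_upd[OF ih hi0 ik]
    have "Om h k (xs[i := a *\<^sub>R u + b *\<^sub>R w]) = det (\<chi> r. if r = i0 then Pm h k (a *\<^sub>R u + b *\<^sub>R w) else OmM h k xs $ r)"
      using th by (simp add: Om_def eqM)
    also have "\<dots> = det (\<chi> r. if r = i0 then a *s Pm h k u + b *s Pm h k w else OmM h k xs $ r)"
      by (simp only: Pm_lin)
    also have "\<dots> = det (\<chi> r. if r = i0 then a *s Pm h k u else OmM h k xs $ r) + det (\<chi> r. if r = i0 then b *s Pm h k w else OmM h k xs $ r)"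
      by (rule det_row_add)
    also have "\<dots> = a * det (\<chi> r. if r = i0 then Pm h k u else OmM h k xs $ r) + b * det (\<chi> r. if r = i0 then Pm h k w else OmM h k xs $ r)"
      by (simp only: det_row_mul)
    also have "\<dots> = a * Om h k (xs[i := u]) + b * Om h k (xs[i := w])"
      using th by (simp add: Om_def eqM)
    finally show ?thesis .
  qed
  have 3: "Om h k xs = 0" if th: "length xs = Suc k" "\<not> distinct xs" for xs
  proof -
    obtain p q where pq: "p < length xs" "q < length xs" "p \<noteq> q" "xs ! p = xs ! q"
      using th(2) by (auto simp: distinct_conv_nth)
    define p0 where "p0 = inv h p"
    define q0 where "q0 = inv h q"
    have hp: "h p0 = p" unfolding p0_def using hinv pq th kn by simp
    have hq: "h q0 = q" unfolding q0_def using hinv pq th kn by simp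
    have ne: "p0 \<noteq> q0" using hp hq pq by auto
    have "row p0 (OmM h k xs) = row q0 (OmM h k xs)"
      using hp hq pq th by (simp add: row_eq OmM_def)
    then show ?thesis using det_identical_rows[OF ne, of "OmM h k xs"] by (simp add: Om_def)
  qed
  have m2: "\<forall>xs i u w (a::real) b. length xs = Suc k \<and> i < Suc k \<longrightarrow>
        Om h k (xs[i := a *\<^sub>R u + b *\<^sub>R w]) = a * Om h k (xs[i := u]) + b * Om h k (xs[i := w])"
    using 2 by blast
  have m3: "\<forall>xs. length xs = Suc k \<and> \<not> distinct xs \<longrightarrow> Om h k xs = 0" using 3 by blast
  show ?thesis unfolding kforms_def mem_Collect_eq using 1 m2 m3 by (intro conjI)
qed

lemma Om_K: assumes H: "bij_betw h (UNIV::'n::finite set) {0..<CARD('n)}" and "Pm h k Y = 0"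
  shows "Om h k (Y # xs) = 0"
proof -
  have "h (inv h 0) = 0"
    by (rule bij_hinv[OF H]) simp
  then have "row (inv h 0) (OmM h k (Y # xs)) = 0" using assms by (simp add: row_eq OmM_def)
  then show ?thesis by (simp add: Om_def det_zero_row)
qed




lemma Om_basis: assumes H: "bij_betw h (UNIV::'n::finite set) {0..<CARD('n)}" and kn: "k < CARD('n)"
  and ha: "h a \<le> k"
  shows "Om h k (map (\<lambda>m. if m = h a then X else axis (inv h m) 1) [0..<Suc k]) = X $ a"
proof -
  have ih: "inj h" using H by (simp add: bij_betw_def)
  define Ls where "Ls = map (\<lambda>m. if m = h a then X else axis (inv h m) 1) [0..<Suc k]"
  have lLs: "length Ls = Suc k" by (simp add: Ls_def)
  have Lsn: "Ls ! h r = (if r = a then X else axis r 1)" if "h r \<le> k" for r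
  proof -
    have "h r < Suc k" using that by simp
    then have "Ls ! h r = (if h r = h a then X else axis (inv h (h r)) 1)"
      by (simp add: Ls_def del: upt_Suc)
    also have "\<dots> = (if r = a then X else axis r 1)" using ih by (auto simp: inj_eq inv_f_f)
    finally show ?thesis .
  qed
  have Pax: "Pm h k (axis r 1) = axis r 1" if "h r \<le> k" for r
    using that by (auto simp: Pm_def vec_eq_iff axis_def)
  have M: "OmM h k Ls = (\<chi> r. if r = a then Pm h k X else axis r 1)"
  proof (rule vec_eq_iff[THEN iffD2], intro allI)
    fix r
    show "OmM h k Ls $ r = (\<chi> r. if r = a then Pm h k X else axis r 1) $ r"
    proof (cases "h r \<le> k")
      case True then show ?thesis using Lsn[OF True] Pax[OF True] by (simp add: OmM_def)
    next
      case False then have "r \<noteq> a" using ha by auto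
      then show ?thesis using False by (simp add: OmM_def)
    qed
  qed
  define A0 :: "real^'n^'n" where "A0 = (\<chi> r. if r = a then (X $ a) *s axis r 1 else axis r 1)"
  have I: "(\<chi> r. if r = a then axis r 1 else axis r (1::real)) = (mat 1 :: real^'n^'n)"
    by (simp add: vec_eq_iff mat_def axis_def)
  have dA0: "det A0 = X $ a"
    unfolding A0_def det_row_mul I by simp
  define x where "x = Pm h k X - (X $ a) *s axis a 1"
  have xa: "x $ a = 0" using ha by (simp add: x_def Pm_def)
  have rowA0: "row j A0 = axis j 1" if "j \<noteq> a" for j using that by (simp add: row_eq A0_def)
  have xs: "x \<in> vec.span {row j A0 |j. j \<noteq> a}"
  proof -
    have "(\<Sum>j\<in>UNIV. x $ j *s axis j 1) \<in> vec.span {row j A0 |j. j \<noteq> a}"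
    proof (rule vec.span_sum)
      fix j :: 'n
      show "x $ j *s axis j 1 \<in> vec.span {row j A0 |j. j \<noteq> a}"
      proof (cases "j = a")
        case True then show ?thesis using xa by (simp add: vec.span_zero)
      next
        case False
        have "axis j 1 = row j A0 \<and> j \<noteq> a" using rowA0[OF False] False by simp
        then have "axis j 1 \<in> {row j A0 |j. j \<noteq> a}" by blast
        then show ?thesis by (intro vec.span_scale vec.span_base)
      qed
    qed
    then show ?thesis by (simp add: basis_expansion)
  qed
  have "det (\<chi> r. if r = a then row a A0 + x else row r A0) = det A0"
    by (rule det_row_span[OF xs])
  moreover have "(\<chi> r. if r = a then row a A0 + x else row r A0) = OmM h k Ls"
    unfolding M by (simp add: vec_eq_iff row_eq A0_def x_def)
  ultimately have "det (OmM h k Ls) = X $ a" using dA0 by simp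
  then show ?thesis using lLs by (simp add: Om_def Ls_def)
qed

lemma kf_swap_nz: assumes "\<alpha> \<in> kforms m" "\<alpha> xs \<noteq> 0" "i \<noteq> j" "i < length xs" "j < length xs"
  shows "\<alpha> (xs[i := xs ! j, j := xs ! i]) \<noteq> 0"
proof -
  have "\<alpha> (xs[i := xs ! i, j := xs ! j]) = - \<alpha> (xs[i := xs ! j, j := xs ! i])"
    by (rule kf_swap[OF assms(1,3,4,5)])
  then show ?thesis using assms(2) by simp
qed

lemma move2: assumes ak: "\<alpha> \<in> kforms m" and nz: "\<alpha> Ls \<noteq> 0" and pq: "p \<noteq> q" "p < length Ls" "q < length Ls"
  shows "\<exists>zs. \<alpha> (Ls ! q # Ls ! p # zs) \<noteq> 0"
proof -
  define L1 where "L1 = (if q = 0 then Ls else Ls[0 := Ls ! q, q := Ls ! 0])"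
  define p1 where "p1 = (if q = 0 then p else if p = 0 then q else p)"
  have l1: "length L1 = length Ls" by (simp add: L1_def)
  have n1: "\<alpha> L1 \<noteq> 0"
  proof (cases "q = 0")
    case True then show ?thesis using nz by (simp add: L1_def)
  next
    case False
    have "Ls \<noteq> []" using pq by auto
    then show ?thesis using kf_swap_nz[OF ak nz, of 0 q] pq False by (simp add: L1_def)
  qed
  have a1: "L1 ! 0 = Ls ! q"
  proof (cases "q = 0")
    case True then show ?thesis by (simp add: L1_def)
  next
    case False
    then have "Ls[0 := Ls ! q, q := Ls ! 0] ! 0 = Ls[0 := Ls ! q] ! 0" by simp
    also have "\<dots> = Ls ! q" using pq(3) by (intro nth_list_update_eq) linarith
    finally show ?thesis using False by (simp add: L1_def)
  qed
  have b1: "L1 ! p1 = Ls ! p" using pq by (auto simp: L1_def p1_def nth_list_update)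
  have p10: "p1 \<noteq> 0" using pq by (auto simp: p1_def)
  have p1l: "p1 < length L1" using pq l1 by (auto simp: p1_def)
  have len2: "1 < length L1" using p10 p1l by simp
  define L2 where "L2 = (if p1 = 1 then L1 else L1[1 := L1 ! p1, p1 := L1 ! 1])"
  have n2: "\<alpha> L2 \<noteq> 0"
  proof (cases "p1 = 1")
    case True then show ?thesis using n1 by (simp add: L2_def)
  next
    case False then show ?thesis using kf_swap_nz[OF ak n1, of 1 p1] p1l len2 by (simp add: L2_def)
  qed
  have a2: "L2 ! 0 = Ls ! q" using a1 p10 len2 by (auto simp: L2_def nth_list_update)
  have b2: "L2 ! 1 = Ls ! p" using b1 len2 p1l by (auto simp: L2_def nth_list_update)
  have "length L2 = length L1" by (simp add: L2_def)
  then obtain x y zs where "L2 = x # y # zs" using len2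
    by (metis One_nat_def Suc_less_eq length_Cons less_nat_zero_code list.size(3) neq_Nil_conv)
  then show ?thesis using n2 a2 b2 by auto
qed

lemma hyper_Ann:
  fixes c :: "'n::finite"
  assumes k2: "2 \<le> k"
  shows "Ann k {x :: real^'n. x $ c = 0} = {zform}"
proof
  show "{zform} \<subseteq> Ann k {x :: real^'n. x $ c = 0}" unfolding Ann_def using zform_kforms by simp
next
  show "Ann k {x :: real^'n. x $ c = 0} \<subseteq> {zform}"
  proof
    fix \<alpha> assume aA: "\<alpha> \<in> Ann k {x :: real^'n. x $ c = 0}"
    have ak: "\<alpha> \<in> kforms k" using aA by (simp add: Ann_def)
    have aE: "\<alpha> (Y # zs) = 0" if "Y $ c = 0" for Y zs
    proof -
      have "ip Y \<alpha> = zform" using aA that by (simp add: Ann_def)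
      then show ?thesis by (metis ip_def zform_def)
    qed
    define u :: "real^'n" where "u = axis c 1"
    have dec: "v = (v - (v $ c) *\<^sub>R u) + (v $ c) *\<^sub>R u" for v by simp
    have inE: "(v - (v $ c) *\<^sub>R u) $ c = 0" for v by (simp add: u_def)
    have "\<alpha> xs = 0" for xs
    proof (cases "length xs = k")
      case False then show ?thesis using kf_len[OF ak] by blast
    next
      case True
      then obtain v1 v2 r where xs: "xs = v1 # v2 # r" using k2
        by (metis One_nat_def Suc_1 Suc_le_length_iff le_SucE le_trans order_refl)
      define e1 where "e1 = v1 - (v1 $ c) *\<^sub>R u"
      define e2 where "e2 = v2 - (v2 $ c) *\<^sub>R u"
      have "\<alpha> (v1 # v2 # r) = \<alpha> ((e1 + (v1 $ c) *\<^sub>R u) # v2 # r)" by (simp add: e1_def)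
      also have "\<dots> = \<alpha> (e1 # v2 # r) + (v1 $ c) * \<alpha> (u # v2 # r)"
        by (simp only: kf_add0[OF ak] kf_scale0[OF ak])
      also have "\<dots> = (v1 $ c) * \<alpha> (u # v2 # r)"
        using aE[OF inE[of v1]] by (simp add: e1_def)
      also have "\<alpha> (u # v2 # r) = \<alpha> (u # (e2 + (v2 $ c) *\<^sub>R u) # r)" by (simp add: e2_def)
      also have "\<dots> = \<alpha> (u # e2 # r)"
        by (simp add: kf_add1[OF ak] kf_scale1[OF ak] kf_same01[OF ak])
      also have "\<dots> = - \<alpha> (e2 # u # r)" by (rule kf_swap01[OF ak])
      also have "\<dots> = 0" using aE[OF inE[of v2]] by (simp add: e2_def)
      finally show ?thesis using xs by simp
    qed
    then show "\<alpha> \<in> {zform}" by (auto simp: zform_def)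
  qed
qed




lemma circ_zform: "circ {zform} = UNIV" by (simp add: circ_def)

lemma part2:
  fixes c :: "'n::finite"
  assumes k2: "2 \<le> k"
  shows "\<exists>L :: ((real^'n) \<times> 'n form) set. is_subspace k L \<and> nonstandard k L \<and> C2s k L \<and> \<not> C2w k L"
proof -
  define Ec where "Ec = {x :: real^'n. x $ c = 0}"
  define L :: "((real^'n) \<times> 'n form) set" where "L = {p. fst p $ c = 0 \<and> snd p = zform}"
  have zz: "(\<lambda>xs. zform xs + zform xs) = zform" "(\<lambda>xs. a * zform xs) = zform" for a
    by (simp_all add: zform_def)
  have sub: "is_subspace k L"
    unfolding is_subspace_def L_def using zform_kforms zz by auto
  have EL: "Eproj L = Ec"
  proof
    show "Eproj L \<subseteq> Ec" unfolding Eproj_def L_def Ec_def by auto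
    show "Ec \<subseteq> Eproj L"
    proof
      fix x assume "x \<in> Ec"
      then have "(x, zform) \<in> L" unfolding L_def Ec_def by simp
      then show "x \<in> Eproj L" unfolding Eproj_def by (metis fst_conv image_eqI)
    qed
  qed
  have iso: "isotropic k L"
    unfolding isotropic_def Lperp_def L_def pairing_def using zform_kforms
    by (auto simp: zform_def ip_def)
  have A: "Ann k Ec = {zform}" unfolding Ec_def by (rule hyper_Ann[OF k2])
  have EU: "Ec \<noteq> UNIV"
  proof
    assume "Ec = UNIV"
    then have "axis c 1 \<in> Ec" by simp
    then show False by (simp add: Ec_def)
  qed
  have ns: "nonstandard k L" unfolding nonstandard_def EL A circ_zform using iso EU by metis
  have LV: "LV L = Ec" unfolding LV_def L_def Ec_def by simp
  have P: "pr2 L = {zform}"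
  proof
    show "pr2 L \<subseteq> {zform}" unfolding pr2_def L_def by auto
    have "(0, zform) \<in> L" unfolding L_def by simp
    then show "{zform} \<subseteq> pr2 L" unfolding pr2_def by (metis empty_subsetI insert_subset snd_conv image_eqI)
  qed
  have "C2s k L" unfolding C2s_def using iso LV P A by simp
  moreover have "\<not> C2w k L" unfolding C2w_def LV P circ_zform using EU by simp
  ultimately show ?thesis using sub ns by blast
qed


lemma part3:
  assumes H: "bij_betw h (UNIV::'n::finite set) {0..<CARD('n)}" and k2: "2 \<le> k" and kn: "k < CARD('n)"
  shows "\<exists>L :: ((real^'n) \<times> 'n form) set. is_subspace k L \<and> nonstandard k L \<and> C2w k L \<and> \<not> C2s k L"
proof -
  have ih: "inj h" using H by (simp add: bij_betw_def)
  define \<Omega> where "\<Omega> = Om h k"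
  have \<Omega>k: "\<Omega> \<in> kforms (Suc k)" unfolding \<Omega>_def by (rule Om_kforms[OF H kn])
  have ipk: "ip Y \<Omega> \<in> kforms k" for Y using ip_kforms[OF \<Omega>k, of Y] by simp
  define c where "c = inv h k"
  have hc: "h c = k" unfolding c_def by (rule bij_hinv[OF H kn])
  define Ec where "Ec = {x :: real^'n. x $ c = 0}"
  define L :: "((real^'n) \<times> 'n form) set" where "L = {p. fst p $ c = 0 \<and> snd p = ip (fst p) \<Omega>}"
  have ipadd: "ip (Y + Y') \<Omega> = (\<lambda>xs. ip Y \<Omega> xs + ip Y' \<Omega> xs)" for Y Y'
    by (simp add: ip_def kf_add0[OF \<Omega>k])
  have ipscale: "ip (a *\<^sub>R Y) \<Omega> = (\<lambda>xs. a * ip Y \<Omega> xs)" for a Y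
    by (simp add: ip_def kf_scale0[OF \<Omega>k])
  have ip0: "ip 0 \<Omega> = zform" by (rule ip_zero_vec[OF \<Omega>k])
  have sub: "is_subspace k L"
    unfolding is_subspace_def L_def using ipk ipadd ipscale ip0 by auto
  have EL: "Eproj L = Ec"
  proof
    show "Eproj L \<subseteq> Ec" unfolding Eproj_def L_def Ec_def by auto
    show "Ec \<subseteq> Eproj L"
    proof
      fix x assume "x \<in> Ec"
      then have "(x, ip x \<Omega>) \<in> L" unfolding L_def Ec_def by simp
      then show "x \<in> Eproj L" unfolding Eproj_def by (metis fst_conv image_eqI)
    qed
  qed
  have iso: "isotropic k L"
    unfolding isotropic_def Lperp_def
  proof (intro subsetI CollectI conjI ballI)
    fix q assume q: "q \<in> L"
    then show "snd q \<in> kforms k" using ipk by (simp add: L_def)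
    fix p assume p: "p \<in> L"
    show "pairing p q = zform"
    proof
      fix xs
      have "pairing p q xs = \<Omega> (fst q # fst p # xs) + \<Omega> (fst p # fst q # xs)"
        using p q by (simp add: L_def pairing_def ip_def)
      also have "\<dots> = 0" using kf_swap01[OF \<Omega>k, of "fst q" "fst p" xs] by simp
      finally show "pairing p q xs = zform xs" by (simp add: zform_def)
    qed
  qed
  have A: "Ann k Ec = {zform}" unfolding Ec_def by (rule hyper_Ann[OF k2])
  have EU: "Ec \<noteq> UNIV"
  proof
    assume "Ec = UNIV"
    then have "axis c 1 \<in> Ec" by simp
    then show False by (simp add: Ec_def)
  qed
  have ns: "nonstandard k L" unfolding nonstandard_def EL A circ_zform using iso EU by metis
  define K where "K = {X :: real^'n. \<forall>j. h j \<le> k \<longrightarrow> X $ j = 0}"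
  have KE: "X $ c = 0" if "X \<in> K" for X using that hc by (simp add: K_def)
  have KP: "Pm h k X = 0" if "X \<in> K" for X using that by (simp add: K_def Pm_def vec_eq_iff)
  have Kip: "ip X \<Omega> = zform" if "X \<in> K" for X
    using Om_K[OF H KP[OF that]] by (simp add: ip_def zform_def \<Omega>_def fun_eq_iff)
  have bex: "\<exists>b. h b \<le> k \<and> b \<noteq> a \<and> b \<noteq> c" if "h a \<le> k" for a
  proof -
    define m where "m = (if h a = 0 then 1 else 0::nat)"
    have mk: "m < CARD('n)" "m \<le> k" using k2 kn by (auto simp: m_def)
    define b where "b = inv h m"
    have hb: "h b = m" unfolding b_def by (rule bij_hinv[OF H mk(1)])
    have "h b \<noteq> h a" using hb by (simp add: m_def)
    then have "b \<noteq> a" by blast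
    moreover have "h b \<noteq> h c" using hb hc k2 by (simp add: m_def)
    then have "b \<noteq> c" by blast
    ultimately show ?thesis using hb mk by blast
  qed
  have key: "\<exists>zs. \<Omega> (axis b 1 # X # zs) \<noteq> 0" if "h a \<le> k" "X $ a \<noteq> 0" "h b \<le> k" "b \<noteq> a" for a b X
  proof -
    define Ls where "Ls = map (\<lambda>m. if m = h a then X else axis (inv h m) 1) [0..<Suc k]"
    have nz: "\<Omega> Ls \<noteq> 0" using Om_basis[OF H kn that(1), of X] that(2) by (simp add: \<Omega>_def Ls_def)
    have hab: "h a \<noteq> h b" using that(4) ih by (metis injD)
    have la: "Ls ! h a = X" using that(1) by (simp add: Ls_def del: upt_Suc)
    have lb: "Ls ! h b = axis b 1" using that(3) hab ih by (simp add: Ls_def inv_f_f del: upt_Suc)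
    have "length Ls = Suc k" by (simp add: Ls_def)
    then have "h a < length Ls" "h b < length Ls" using that(1,3) by auto
    then show ?thesis using move2[OF \<Omega>k nz hab] la lb by metis
  qed
  have notK: "\<exists>a. h a \<le> k \<and> X $ a \<noteq> 0" if "X \<notin> K" for X using that by (auto simp: K_def)
  have ipnz: "ip X \<Omega> \<noteq> zform" if nK: "X \<notin> K" for X
  proof -
    obtain a where a: "h a \<le> k" "X $ a \<noteq> 0" using notK[OF nK] by blast
    obtain b where b: "h b \<le> k" "b \<noteq> a" using bex[OF a(1)] by blast
    obtain zs where "\<Omega> (axis b 1 # X # zs) \<noteq> 0" using key[OF a b] by blast
    then have "\<Omega> (X # axis b 1 # zs) \<noteq> 0" using kf_swap01[OF \<Omega>k, of X "axis b 1" zs] by simp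
    then show ?thesis by (metis ip_def zform_def)
  qed
  have LV: "LV L = K"
  proof
    show "LV L \<subseteq> K"
    proof
      fix X assume "X \<in> LV L"
      then have "ip X \<Omega> = zform" by (simp add: LV_def L_def)
      then show "X \<in> K" using ipnz by blast
    qed
    show "K \<subseteq> LV L" using KE Kip by (auto simp: LV_def L_def)
  qed
  have pr2: "pr2 L = {ip Y \<Omega> | Y. Y $ c = 0}"
  proof
    show "pr2 L \<subseteq> {ip Y \<Omega> | Y. Y $ c = 0}" unfolding pr2_def L_def by auto
    show "{ip Y \<Omega> | Y. Y $ c = 0} \<subseteq> pr2 L"
    proof
      fix \<eta> assume "\<eta> \<in> {ip Y \<Omega> | Y. Y $ c = 0}"
      then obtain Y where Y: "Y $ c = 0" "\<eta> = ip Y \<Omega>" by blast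
      then have "(Y, \<eta>) \<in> L" by (simp add: L_def)
      then show "\<eta> \<in> pr2 L" unfolding pr2_def by (metis snd_conv image_eqI)
    qed
  qed
  have circ: "circ (pr2 L) = K"
  proof
    show "circ (pr2 L) \<subseteq> K"
    proof
      fix X assume XC: "X \<in> circ (pr2 L)"
      show "X \<in> K"
      proof (rule ccontr)
        assume "X \<notin> K"
        obtain a where a: "h a \<le> k" "X $ a \<noteq> 0" using notK[OF \<open>X \<notin> K\<close>] by blast
        obtain b where b: "h b \<le> k" "b \<noteq> a" "b \<noteq> c" using bex[OF a(1)] by blast
        obtain zs where zs: "\<Omega> (axis b 1 # X # zs) \<noteq> 0" using key[OF a b(1,2)] by blast
        have "ip (axis b 1) \<Omega> \<in> pr2 L" unfolding pr2 using b(3) by (auto simp: axis_def)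
        then have "ip X (ip (axis b 1) \<Omega>) = zform" using XC by (simp add: circ_def)
        then have "\<Omega> (axis b 1 # X # zs) = 0" by (metis ip_def zform_def)
        then show False using zs by simp
      qed
    qed
    show "K \<subseteq> circ (pr2 L)"
    proof
      fix X assume XK: "X \<in> K"
      have "ip X (ip Y \<Omega>) = zform" for Y
      proof
        fix xs
        have "ip X (ip Y \<Omega>) xs = - \<Omega> (X # Y # xs)" using kf_swap01[OF \<Omega>k, of Y X xs] by (simp add: ip_def)
        also have "\<dots> = 0" using Kip[OF XK] by (metis ip_def zform_def neg_equal_0_iff_equal)
        finally show "ip X (ip Y \<Omega>) xs = zform xs" by (simp add: zform_def)
      qed
      then show "X \<in> circ (pr2 L)" unfolding pr2 circ_def by auto
    qed
  qed
  have c2w: "C2w k L" unfolding C2w_def using iso LV circ by simp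
  define \<beta>0 where "\<beta>0 = ip (axis c 1) \<Omega>"
  have b0A: "\<beta>0 \<in> Ann k (LV L)"
    unfolding LV Ann_def
  proof (intro CollectI conjI ballI)
    show "\<beta>0 \<in> kforms k" unfolding \<beta>0_def by (rule ipk)
    fix Y assume YK: "Y \<in> K"
    show "ip Y \<beta>0 = zform"
    proof
      fix xs
      have "ip Y \<beta>0 xs = - \<Omega> (Y # axis c 1 # xs)" using kf_swap01[OF \<Omega>k, of "axis c 1" Y xs] by (simp add: ip_def \<beta>0_def)
      also have "\<dots> = 0" using Kip[OF YK] by (metis ip_def zform_def neg_equal_0_iff_equal)
      finally show "ip Y \<beta>0 xs = zform xs" by (simp add: zform_def)
    qed
  qed
  have b0P: "\<beta>0 \<notin> pr2 L"
  proof
    assume "\<beta>0 \<in> pr2 L"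
    then obtain Y where Y: "Y $ c = 0" "\<beta>0 = ip Y \<Omega>" unfolding pr2 by blast
    define W where "W = Y + (-1) *\<^sub>R axis c 1"
    have "ip W \<Omega> = (\<lambda>xs. ip Y \<Omega> xs + (-1) * ip (axis c 1) \<Omega> xs)" unfolding W_def ipadd ipscale by simp
    then have "ip W \<Omega> = zform" using Y(2) by (simp add: \<beta>0_def zform_def)
    moreover have "W \<notin> K"
    proof
      assume "W \<in> K"
      then have "W $ c = 0" by (rule KE)
      then show False using Y(1) by (simp add: W_def)
    qed
    ultimately show False using ipnz by blast
  qed
  have "\<not> C2s k L" unfolding C2s_def using b0A b0P by blast
  then show ?thesis using sub ns c2w by blast
qed


theorem propositionA5:
  fixes k :: nat
  assumes "2 \<le> k" and "k \<le> CARD('n) - 1"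
  shows "(\<forall>L :: ((real^('n::finite)) \<times> ('n::finite) form) set. is_subspace k L \<and> nonstandard k L \<longrightarrow>
            C3s k L \<and> \<not> C3w k L \<and> \<not> C1 k L)
       \<and> (\<exists>L :: ((real^('n::finite)) \<times> ('n::finite) form) set. is_subspace k L \<and> nonstandard k L \<and>
            C2s k L \<and> \<not> C2w k L)
       \<and> (\<exists>L :: ((real^('n::finite)) \<times> ('n::finite) form) set. is_subspace k L \<and> nonstandard k L \<and>
            C2w k L \<and> \<not> C2s k L)"
proof -
  have k1: "1 \<le> k" using assms(1) by simp
  have kn: "k < CARD('n)" using assms by linarith
  obtain h where H: "bij_betw h (UNIV::'n set) {0..<CARD('n)}"
    using ex_bij_betw_finite_nat[of "UNIV::'n set"] by auto
  have p1: "\<forall>L :: ((real^('n::finite)) \<times> ('n::finite) form) set. is_subspace k L \<and> nonstandard k L \<longrightarrow>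
            C3s k L \<and> \<not> C3w k L \<and> \<not> C1 k L"
    using part1[OF _ _ k1] by blast
  have p2: "\<exists>L :: ((real^('n::finite)) \<times> ('n::finite) form) set. is_subspace k L \<and> nonstandard k L \<and>
            C2s k L \<and> \<not> C2w k L"
    by (rule part2[OF assms(1)])
  have p3: "\<exists>L :: ((real^('n::finite)) \<times> ('n::finite) form) set. is_subspace k L \<and> nonstandard k L \<and>
            C2w k L \<and> \<not> C2s k L"
    by (rule part3[OF H assms(1) kn])
  show ?thesis using p1 p2 p3 by blast
qed


end
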